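(* Let $\mathcal G=\mathcal G^{(n)}$ be, for each $n$, an $(\alpha,A,\beta,B,\epsilon,\vartheta)$-good $(\Delta_V,\Delta_C)$-regular bipartite graph with $n$ variable nodes and $n(1-R)$ check nodes, and let $H$ be the random parity-check matrix of the $(\mathcal G,\lambda)$ LDA ensemble. If $B>2+(1+\delta)/\lambda$ for some $\delta>0$, then \[ \Pr[H\text{ is not full-rank}]\le n^{-(2\lambda+\delta)}(1+o(1)), \] where $o(1)\to0$ as $n\to\infty$.
   Context: $0<R<1$, $\lambda>0$, $\Delta_V/\Delta_C=1-R$. For a vertex set $S$, $N(S)$ is its neighbourhood. $\mathcal G$ is $(\alpha,A,\beta,B,\epsilon,\vartheta)$-good (with $1\le\alpha<A$, $\frac1{1-R}<\beta<\min\{\frac2{1-R},B\}$, $0<\epsilon<(1-R)/A$, $0<\vartheta<1/(B(1-R))$) if: (L1) every set $S$ of variable nodes with $|S|\le\lceil\epsilon n\rceil$ has $|N(S)|\ge A|S|$; (L2) every set $S$ of variable nodes with $|S|\le\lceil n(1-R)/(2\alpha)\rceil$ has $|N(S)|\ge\alpha|S|$; (R1) every set $T$ of check nodes with $|T|\le\vartheta n(1-R)$ has $|N(T)|\ge B|T|$; (R2) every set $T$ of check nodes with $|T|\le n(1-R)/2$ has $|N(T)|\ge\beta|T|$. The ensemble: $p$ is the smallest prime $\ge n^\lambda$; $\widehat H$ is the $n(1-R)\times n$ $0/1$ biadjacency matrix of $\mathcal G$ (rows = check nodes); $H$ has entries $h_{i,j}=\widehat h_{i,j}h'_{i,j}$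 with $h'_{i,j}$ i.i.d. uniform on $\mathbb F_p$. Full-rank means rank $n(1-R)$ over $\mathbb F_p$. *)

theory Defs
  imports "HOL-Analysis.Analysis" "HOL-Probability.Probability" "HOL-Computational_Algebra.Primes"
begin

(* A bipartite graph with n variable nodes {0..<n} and m check nodes {0..<m} is given
   by its 0/1 biadjacency relation E i j  (check node i, variable node j). *)

definition var_nbhd :: "(nat \<Rightarrow> nat \<Rightarrow> bool) \<Rightarrow> nat \<Rightarrow> nat set \<Rightarrow> nat set" where
  "var_nbhd E m S = {i. i < m \<and> (\<exists>j\<in>S. E i j)}"

definition chk_nbhd :: "(nat \<Rightarrow> nat \<Rightarrow> bool) \<Rightarrow> nat \<Rightarrow> nat set \<Rightarrow> nat set" where
  "chk_nbhd E n T = {j. j < n \<and> (\<exists>i\<in>T. E i j)}"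

definition biregular :: "(nat \<Rightarrow> nat \<Rightarrow> bool) \<Rightarrow> nat \<Rightarrow> nat \<Rightarrow> nat \<Rightarrow> nat \<Rightarrow> bool" where
  "biregular E n m dV dC \<longleftrightarrow>
     (\<forall>i j. E i j \<longrightarrow> i < m \<and> j < n) \<and>
     (\<forall>j<n. card {i. i < m \<and> E i j} = dV) \<and>
     (\<forall>i<m. card {j. j < n \<and> E i j} = dC)"

definition good ::
  "real \<Rightarrow> real \<Rightarrow> real \<Rightarrow> real \<Rightarrow> real \<Rightarrow> real \<Rightarrow> real \<Rightarrow>
   (nat \<Rightarrow> nat \<Rightarrow> bool) \<Rightarrow> nat \<Rightarrow> nat \<Rightarrow> bool" where
  "good R \<alpha> A \<beta> B \<epsilon> \<theta> E n m \<longleftrightarrow>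
     (\<forall>S. S \<subseteq> {..<n} \<and> real (card S) \<le> real_of_int \<lceil>\<epsilon> * real n\<rceil>
          \<longrightarrow> real (card (var_nbhd E m S)) \<ge> A * real (card S)) \<and>
     (\<forall>S. S \<subseteq> {..<n} \<and> real (card S) \<le> real_of_int \<lceil>real n * (1 - R) / (2 * \<alpha>)\<rceil>
          \<longrightarrow> real (card (var_nbhd E m S)) \<ge> \<alpha> * real (card S)) \<and>
     (\<forall>T. T \<subseteq> {..<m} \<and> real (card T) \<le> \<theta> * real n * (1 - R)
          \<longrightarrow> real (card (chk_nbhd E n T)) \<ge> B * real (card T)) \<and>
     (\<forall>T. T \<subseteq> {..<m} \<and> real (card T) \<le> real n * (1 - R) / 2
          \<longrightarrow> real (card (chk_nbhd E n T)) \<ge> \<beta> * real (card T))"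

definition lda_prime :: "real \<Rightarrow> nat \<Rightarrow> nat" where
  "lda_prime lam n = (LEAST p. prime p \<and> real p \<ge> real n powr lam)"

(* Linear algebra over F_p, with F_p represented by {0..<p} and arithmetic mod p.
   A set I of rows of the m x n matrix M is linearly independent over F_p. *)
definition rows_indep_mod :: "nat \<Rightarrow> nat \<Rightarrow> (nat \<Rightarrow> nat \<Rightarrow> nat) \<Rightarrow> nat set \<Rightarrow> bool" where
  "rows_indep_mod p n M I \<longleftrightarrow>
     (\<forall>c :: nat \<Rightarrow> nat. (\<forall>i\<in>I. c i < p) \<and> (\<forall>j<n. (\<Sum>i\<in>I. c i * M i j) mod p = 0)
        \<longrightarrow> (\<forall>i\<in>I. c i = 0))"

definition rank_mod :: "nat \<Rightarrow> nat \<Rightarrow> nat \<Rightarrow> (nat \<Rightarrow> nat \<Rightarrow> nat) \<Rightarrow> nat" where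
  "rank_mod p m n M = Max {card I | I. I \<subseteq> {..<m} \<and> rows_indep_mod p n M I}"

(* the random coefficient space: h' : [m] x [n] -> F_p, uniformly (i.e. i.i.d. uniform entries) *)
definition coeff_space :: "nat \<Rightarrow> nat \<Rightarrow> nat \<Rightarrow> (nat \<times> nat \<Rightarrow> nat) set" where
  "coeff_space p m n = ({..<m} \<times> {..<n}) \<rightarrow>\<^sub>E {..<p}"

definition lda_matrix :: "(nat \<Rightarrow> nat \<Rightarrow> bool) \<Rightarrow> (nat \<times> nat \<Rightarrow> nat) \<Rightarrow> nat \<Rightarrow> nat \<Rightarrow> nat" where
  "lda_matrix E h' i j = of_bool (E i j) * h' (i, j)"

definition prob_not_full_rank :: "real \<Rightarrow> (nat \<Rightarrow> nat \<Rightarrow> bool) \<Rightarrow> nat \<Rightarrow> nat \<Rightarrow> real" where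
  "prob_not_full_rank lam E n m =
     (let p = lda_prime lam n in
      measure_pmf.prob (pmf_of_set (coeff_space p m n))
        {h'. rank_mod p m n (lda_matrix E h') \<noteq> m})"

end

theory Submission
  imports Defs "HOL-Number_Theory.Cong" "HOL-Real_Asymp.Real_Asymp"
begin

definition supp :: "nat \<Rightarrow> (nat \<Rightarrow> nat) \<Rightarrow> nat set" where
  "supp m c = {i. i < m \<and> c i \<noteq> 0}"

definition Cs :: "nat \<Rightarrow> nat \<Rightarrow> (nat \<Rightarrow> nat) set" where
  "Cs p m = {c \<in> {..<m} \<rightarrow>\<^sub>E {..<p}. supp m c \<noteq> {} \<and> c (Min (supp m c)) = 1}"

definition Sol :: "(nat \<Rightarrow> nat \<Rightarrow> bool) \<Rightarrow> nat \<Rightarrow> nat \<Rightarrow> nat \<Rightarrow> (nat \<Rightarrow> nat) \<Rightarrow> (nat \<times> nat \<Rightarrow> nat) set" where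
  "Sol E p m n c = {h \<in> coeff_space p m n. \<forall>j<n. (\<Sum>i<m. c i * lda_matrix E h i j) mod p = 0}"

lemma rank_eq_if_indep:
  assumes "rows_indep_mod p n M {..<m}"
  shows "rank_mod p m n M = m"
proof -
  let ?S = "{card I | I. I \<subseteq> {..<m} \<and> rows_indep_mod p n M I}"
  have sub: "?S \<subseteq> {..m}"
  proof
    fix x assume "x \<in> ?S"
    then obtain I where "x = card I" "I \<subseteq> {..<m}" by auto
    then show "x \<in> {..m}" using card_mono[of "{..<m}" I] by auto
  qed
  have "m \<in> ?S" using assms by force
  then show ?thesis unfolding rank_mod_def
    using sub by (intro Max_eqI) (auto intro: finite_subset)
qed

lemma bad_subset:
  assumes p: "prime p"
  shows "{h \<in> coeff_space p m n. rank_mod p m n (lda_matrix E h) \<noteq> m} \<subseteq> (\<Union>c\<in>Cs p m. Sol E p m n c)"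
proof
  fix h assume h: "h \<in> {h \<in> coeff_space p m n. rank_mod p m n (lda_matrix E h) \<noteq> m}"
  let ?M = "lda_matrix E h"
  have "\<not> rows_indep_mod p n ?M {..<m}" using h rank_eq_if_indep by blast
  then obtain c where cp: "\<forall>i<m. c i < p" and cs: "\<forall>j<n. (\<Sum>i<m. c i * ?M i j) mod p = 0"
    and cnz: "\<exists>i<m. c i \<noteq> 0"
    unfolding rows_indep_mod_def by auto
  have p1: "p > 1" using p prime_gt_1_nat by blast
  define i0 where "i0 = Min (supp m c)"
  have fin: "finite (supp m c)" unfolding supp_def by auto
  have ne: "supp m c \<noteq> {}" using cnz unfolding supp_def by auto
  have i0: "i0 \<in> supp m c" unfolding i0_def using Min_in[OF fin ne] .
  have ci0: "c i0 \<noteq> 0" "c i0 < p" using i0 cp unfolding supp_def by auto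
  have cop: "coprime (c i0) p"
  proof -
    have "\<not> p dvd c i0" using ci0 by (auto dest: dvd_imp_le)
    then show ?thesis using p by (metis coprime_commute prime_imp_coprime)
  qed
  obtain u where u: "[c i0 * u = Suc 0] (mod p)" using cong_solve_coprime_nat[OF cop] by blast
  have ucop: "coprime u p"
    using u by (metis cong_imp_coprime cong_sym coprime_1_left coprime_mult_left_iff One_nat_def)
  define c' where "c' = (\<lambda>i. if i < m then c i * u mod p else undefined)"
  have c'E: "c' \<in> {..<m} \<rightarrow>\<^sub>E {..<p}" unfolding c'_def using p1 by (intro PiE_I) auto
  have c'z: "c' i = 0 \<longleftrightarrow> c i = 0" if "i < m" for i
  proof -
    have "c' i = 0 \<longleftrightarrow> p dvd c i * u" using that unfolding c'_def by auto
    also have "\<dots> \<longleftrightarrow> p dvd c i" using ucop p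
      by (metis coprime_commute coprime_dvd_mult_left_iff)
    also have "\<dots> \<longleftrightarrow> c i = 0" using cp that by (metis dvd_0_right nat_dvd_not_less not_gr0)
    finally show ?thesis .
  qed
  have suppeq: "supp m c' = supp m c"
  proof (rule set_eqI)
    fix i show "i \<in> supp m c' \<longleftrightarrow> i \<in> supp m c"
      unfolding supp_def mem_Collect_eq using c'z[of i] by argo
  qed
  have c'i0: "c' i0 = 1"
  proof -
    have "i0 < m" using i0 unfolding supp_def by auto
    then have "c' i0 = c i0 * u mod p" unfolding c'_def by auto
    also have "\<dots> = Suc 0 mod p" using u unfolding cong_def by simp
    finally show ?thesis using p1 by simp
  qed
  have "c' \<in> Cs p m" unfolding Cs_def using c'E suppeq ne c'i0 i0_def by auto
  moreover have "h \<in> Sol E p m n c'"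
    unfolding Sol_def
  proof (intro CollectI conjI allI impI)
    show "h \<in> coeff_space p m n" using h by auto
    fix j assume j: "j < n"
    have "[(\<Sum>i<m. c' i * ?M i j) = (\<Sum>i<m. c i * u * ?M i j)] (mod p)"
      by (rule cong_sum) (auto simp: c'_def intro: cong_mult cong_mod_leftI)
    also have "(\<Sum>i<m. c i * u * ?M i j) = u * (\<Sum>i<m. c i * ?M i j)"
      by (simp add: sum_distrib_left ac_simps)
    also have "[\<dots> = u * 0] (mod p)"
      using cs j by (intro cong_mult) (auto simp: cong_def)
    finally show "(\<Sum>i<m. c' i * ?M i j) mod p = 0" by (simp add: cong_def)
  qed
  ultimately show "h \<in> (\<Union>c\<in>Cs p m. Sol E p m n c)" by blast
qed

lemma card_coeff_space: "card (coeff_space p m n) = p ^ (m * n)"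
  unfolding coeff_space_def by (simp add: card_PiE card_cartesian_product)

lemma card_Sol:
  assumes p: "prime p" and c: "\<forall>i<m. c i < p"
  shows "card (Sol E p m n c) \<le> p ^ (m * n - card (chk_nbhd E n (supp m c)))"
proof -
  define T where "T = supp m c"
  define NT where "NT = chk_nbhd E n T"
  define D where "D = {..<m} \<times> {..<n}"
  define piv where "piv j = Min {i\<in>T. E i j}" for j
  define P where "P = (\<lambda>j. (piv j, j)) ` NT"
  have finT: "finite T" unfolding T_def supp_def by auto
  have pivT: "piv j \<in> T \<and> E (piv j) j" if "j \<in> NT" for j
  proof -
    have "{i\<in>T. E i j} \<noteq> {}" using that unfolding NT_def chk_nbhd_def by auto
    then show ?thesis unfolding piv_def using Min_in[of "{i\<in>T. E i j}"] finT by auto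
  qed
  have PD: "P \<subseteq> D" unfolding P_def D_def using pivT
    by (auto simp: T_def supp_def NT_def chk_nbhd_def)
  have finD: "finite D" unfolding D_def by auto
  have cardP: "card P = card NT" unfolding P_def by (rule card_image) (auto simp: inj_on_def)
  have finNT: "finite NT" unfolding NT_def chk_nbhd_def by auto
  have cardDP: "card (D - P) = m * n - card NT"
    using PD finD by (simp add: card_Diff_subset[OF finite_subset[OF PD finD]] cardP D_def card_cartesian_product)
  define \<phi> where "\<phi> h = restrict h (D - P)" for h :: "nat \<times> nat \<Rightarrow> nat"
  have img: "\<phi> ` Sol E p m n c \<subseteq> (D - P) \<rightarrow>\<^sub>E {..<p}"
    unfolding \<phi>_def Sol_def coeff_space_def D_def by (auto simp: PiE_def Pi_def)
  have inj: "inj_on \<phi> (Sol E p m n c)"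
  proof (rule inj_onI)
    fix h1 h2 assume h1: "h1 \<in> Sol E p m n c" and h2: "h2 \<in> Sol E p m n c" and eq: "\<phi> h1 = \<phi> h2"
    have h1E: "h1 \<in> D \<rightarrow>\<^sub>E {..<p}" and h2E: "h2 \<in> D \<rightarrow>\<^sub>E {..<p}"
      using h1 h2 unfolding Sol_def coeff_space_def D_def by auto
    have off: "h1 x = h2 x" if "x \<in> D - P" for x
      using fun_cong[OF eq, of x] that unfolding \<phi>_def by auto
    show "h1 = h2"
    proof (rule ext)
      fix x
      show "h1 x = h2 x"
      proof (cases "x \<in> D")
        case False then show ?thesis using PiE_arb[OF h1E False] PiE_arb[OF h2E False] by simp
      next
        case True
        show ?thesis
        proof (cases "x \<in> P")
          case False then show ?thesis using True off by auto
        next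
          case xP: True
          then obtain j where j: "j \<in> NT" and x: "x = (piv j, j)" unfolding P_def by auto
          define i0 where "i0 = piv j"
          have i0T: "i0 \<in> T" and Ei0: "E i0 j" using pivT[OF j] unfolding i0_def by auto
          have i0m: "i0 < m" and ci0: "c i0 \<noteq> 0" using i0T unfolding T_def supp_def by auto
          have jn: "j < n" using j unfolding NT_def chk_nbhd_def by auto
          have rest: "(\<Sum>i\<in>{..<m}-{i0}. c i * lda_matrix E h1 i j) = (\<Sum>i\<in>{..<m}-{i0}. c i * lda_matrix E h2 i j)"
          proof (rule sum.cong[OF refl])
            fix i assume i: "i \<in> {..<m} - {i0}"
            have "(i, j) \<in> D" using i jn unfolding D_def by auto
            moreover have "(i, j) \<notin> P" using i unfolding P_def i0_def by auto
            ultimately show "c i * lda_matrix E h1 i j = c i * lda_matrix E h2 i j"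
              using off unfolding lda_matrix_def by auto
          qed
          define R where "R = (\<Sum>i\<in>{..<m}-{i0}. c i * lda_matrix E h1 i j)"
          have s1: "(\<Sum>i<m. c i * lda_matrix E h1 i j) = c i0 * h1 (i0, j) + R"
            unfolding R_def using i0m Ei0 by (simp add: sum.remove[of "{..<m}" i0] lda_matrix_def)
          have s2: "(\<Sum>i<m. c i * lda_matrix E h2 i j) = c i0 * h2 (i0, j) + R"
            unfolding R_def rest using i0m Ei0 by (simp add: sum.remove[of "{..<m}" i0] lda_matrix_def)
          have z1: "(c i0 * h1 (i0, j) + R) mod p = 0" using h1 jn s1 unfolding Sol_def by auto
          have z2: "(c i0 * h2 (i0, j) + R) mod p = 0" using h2 jn s2 unfolding Sol_def by auto
          have "[R + c i0 * h1 (i0, j) = R + c i0 * h2 (i0, j)] (mod p)"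
            using z1 z2 unfolding cong_def by (simp add: add.commute)
          then have "[c i0 * h1 (i0, j) = c i0 * h2 (i0, j)] (mod p)"
            by (simp add: cong_add_lcancel_nat)
          moreover have "coprime (c i0) p"
          proof -
            have "c i0 < p" using c i0m by auto
            then have "\<not> p dvd c i0" using ci0 by (metis nat_dvd_not_less not_gr0)
            then show ?thesis using p by (metis coprime_commute prime_imp_coprime)
          qed
          ultimately have "[h1 (i0, j) = h2 (i0, j)] (mod p)" by (simp add: cong_mult_lcancel_nat)
          moreover have "h1 (i0, j) < p" "h2 (i0, j) < p"
            using h1E h2E True x i0_def by (auto simp: PiE_def Pi_def)
          ultimately have "h1 (i0, j) = h2 (i0, j)" by (rule cong_less_modulus_unique_nat)
          then show ?thesis using x i0_def by simp
        qed
      qed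
    qed
  qed
  have "card (Sol E p m n c) = card (\<phi> ` Sol E p m n c)" using inj by (simp add: card_image)
  also have "\<dots> \<le> card ((D - P) \<rightarrow>\<^sub>E {..<p})"
    by (rule card_mono[OF _ img]) (auto intro: finite_PiE finD)
  also have "\<dots> = p ^ card (D - P)" by (simp add: card_PiE finD)
  finally show ?thesis using cardDP unfolding NT_def T_def by simp
qed

lemma count_supp:
  assumes T: "T \<noteq> {}" "T \<subseteq> {..<m}"
  shows "card {c \<in> Cs p m. supp m c = T} \<le> p ^ (card T - 1)"
proof -
  define i0 where "i0 = Min T"
  have finT: "finite T" using T finite_subset by blast
  have i0T: "i0 \<in> T" unfolding i0_def using Min_in[OF finT T(1)] .
  define \<phi> where "\<phi> c = restrict c (T - {i0})" for c :: "nat \<Rightarrow> nat"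
  have img: "\<phi> ` {c \<in> Cs p m. supp m c = T} \<subseteq> (T - {i0}) \<rightarrow>\<^sub>E {..<p}"
    unfolding \<phi>_def Cs_def using T by (auto simp: PiE_def Pi_def)
  have inj: "inj_on \<phi> {c \<in> Cs p m. supp m c = T}"
  proof (rule inj_onI)
    fix c1 c2 assume c1: "c1 \<in> {c \<in> Cs p m. supp m c = T}" and c2: "c2 \<in> {c \<in> Cs p m. supp m c = T}"
      and eq: "\<phi> c1 = \<phi> c2"
    have E1: "c1 \<in> {..<m} \<rightarrow>\<^sub>E {..<p}" and E2: "c2 \<in> {..<m} \<rightarrow>\<^sub>E {..<p}"
      using c1 c2 unfolding Cs_def by auto
    have one: "c1 i0 = 1" "c2 i0 = 1" using c1 c2 unfolding Cs_def i0_def by auto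
    show "c1 = c2"
    proof (rule ext)
      fix i
      show "c1 i = c2 i"
      proof (cases "i < m")
        case False then have "i \<notin> {..<m}" by simp
        then show ?thesis using PiE_arb[OF E1] PiE_arb[OF E2] by simp
      next
        case True
        show ?thesis
        proof (cases "i \<in> T")
          case False
          then have "c1 i = 0" "c2 i = 0" using c1 c2 True unfolding supp_def by auto
          then show ?thesis by simp
        next
          case iT: True
          show ?thesis
          proof (cases "i = i0")
            case True then show ?thesis using one by simp
          next
            case False then show ?thesis using fun_cong[OF eq, of i] iT unfolding \<phi>_def by auto
          qed
        qed
      qed
    qed
  qed
  have "card {c \<in> Cs p m. supp m c = T} = card (\<phi> ` {c \<in> Cs p m. supp m c = T})"
    using inj by (simp add: card_image)
  also have "\<dots> \<le> card ((T - {i0}) \<rightarrow>\<^sub>E {..<p})"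
    by (rule card_mono[OF _ img]) (auto intro: finite_PiE finT)
  also have "\<dots> = p ^ (card T - 1)" using finT i0T by (simp add: card_PiE)
  finally show ?thesis .
qed

lemma finite_Cs: "finite (Cs p m)"
  unfolding Cs_def by (rule finite_subset[of _ "{..<m} \<rightarrow>\<^sub>E {..<p}"]) (auto intro: finite_PiE)

lemma prob_bound:
  assumes p: "prime p"
  shows "measure_pmf.prob (pmf_of_set (coeff_space p m n))
            {h. rank_mod p m n (lda_matrix E h) \<noteq> m}
         \<le> (\<Sum>T\<in>Pow {..<m} - {{}}. real p ^ (card T - 1) / real p ^ card (chk_nbhd E n T))"
proof -
  define \<Omega> where "\<Omega> = coeff_space p m n"
  have p0: "p > 0" using p prime_gt_0_nat by blast
  have fin\<Omega>: "finite \<Omega>" unfolding \<Omega>_def coeff_space_def by (auto intro: finite_PiE)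
  have card\<Omega>: "card \<Omega> = p ^ (m * n)" unfolding \<Omega>_def by (rule card_coeff_space)
  have ne\<Omega>: "\<Omega> \<noteq> {}" using card\<Omega> p0 by (metis card.empty power_not_zero zero_neq_numeral less_nat_zero_code neq0_conv)
  define Bad where "Bad = {h \<in> \<Omega>. rank_mod p m n (lda_matrix E h) \<noteq> m}"
  have "measure_pmf.prob (pmf_of_set \<Omega>) {h. rank_mod p m n (lda_matrix E h) \<noteq> m}
        = card Bad / card \<Omega>"
    using measure_pmf_of_set[OF ne\<Omega> fin\<Omega>] unfolding Bad_def by (simp add: Int_def)
  also have "card Bad \<le> (\<Sum>c\<in>Cs p m. card (Sol E p m n c))"
  proof -
    have "card Bad \<le> card (\<Union>c\<in>Cs p m. Sol E p m n c)"
      apply (rule card_mono)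
       apply (rule finite_UN_I[OF finite_Cs])
       apply (rule finite_subset[OF _ fin\<Omega>]) apply (auto simp: Sol_def \<Omega>_def)[1]
      using bad_subset[OF p] unfolding Bad_def \<Omega>_def by blast
    also have "\<dots> \<le> (\<Sum>c\<in>Cs p m. card (Sol E p m n c))" by (rule card_UN_le[OF finite_Cs])
    finally show ?thesis .
  qed
  then have "real (card Bad) / card \<Omega> \<le> (\<Sum>c\<in>Cs p m. real (card (Sol E p m n c))) / card \<Omega>"
    by (intro divide_right_mono) (simp_all add: of_nat_sum[symmetric] del: of_nat_sum)
  also have "\<dots> = (\<Sum>c\<in>Cs p m. real (card (Sol E p m n c)) / card \<Omega>)" by (simp add: sum_divide_distrib)
  also have "\<dots> \<le> (\<Sum>c\<in>Cs p m. 1 / real p ^ card (chk_nbhd E n (supp m c)))"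
  proof (rule sum_mono)
    fix c assume c: "c \<in> Cs p m"
    have cp: "\<forall>i<m. c i < p" using c unfolding Cs_def by (auto simp: PiE_def Pi_def)
    define k where "k = card (chk_nbhd E n (supp m c))"
    have "supp m c \<noteq> {}" using c unfolding Cs_def by auto
    then have m1: "m \<ge> 1" unfolding supp_def by auto
    have "k \<le> n" unfolding k_def chk_nbhd_def by (rule order.trans[OF card_mono[of "{..<n}"]]) auto
    also have "n \<le> m * n" using m1 by simp
    finally have kle: "k \<le> m * n" .
    have "real (card (Sol E p m n c)) \<le> real p ^ (m * n - k)"
      using card_Sol[OF p cp, of E n] unfolding k_def by (metis of_nat_le_iff of_nat_power)
    also have "\<dots> = real p ^ (m * n) / real p ^ k" using kle p0 by (simp add: power_diff)
    finally show "real (card (Sol E p m n c)) / card \<Omega> \<le> 1 / real p ^ k"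
      using card\<Omega> p0 by (simp add: divide_simps)
  qed
  also have "\<dots> = (\<Sum>T\<in>supp m ` Cs p m. (\<Sum>c\<in>{c \<in> Cs p m. supp m c = T}. 1 / real p ^ card (chk_nbhd E n (supp m c))))"
    by (rule sum.image_gen[OF finite_Cs])
  also have "\<dots> = (\<Sum>T\<in>supp m ` Cs p m. real (card {c \<in> Cs p m. supp m c = T}) / real p ^ card (chk_nbhd E n T))"
    by (rule sum.cong[OF refl]) simp
  also have "\<dots> \<le> (\<Sum>T\<in>supp m ` Cs p m. real p ^ (card T - 1) / real p ^ card (chk_nbhd E n T))"
  proof (rule sum_mono)
    fix T assume "T \<in> supp m ` Cs p m"
    then have T: "T \<noteq> {}" "T \<subseteq> {..<m}" unfolding Cs_def supp_def by auto
    show "real (card {c \<in> Cs p m. supp m c = T}) / real p ^ card (chk_nbhd E n T) \<le> real p ^ (card T - 1) / real p ^ card (chk_nbhd E n T)"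
    proof (rule divide_right_mono)
      show "real (card {c \<in> Cs p m. supp m c = T}) \<le> real p ^ (card T - 1)"
        using count_supp[OF T, of p] by (metis of_nat_le_iff of_nat_power)
    qed simp
  qed
  also have "\<dots> \<le> (\<Sum>T\<in>Pow {..<m} - {{}}. real p ^ (card T - 1) / real p ^ card (chk_nbhd E n T))"
    by (rule sum_mono2) (auto simp: Cs_def supp_def)
  finally show ?thesis unfolding \<Omega>_def .
qed

lemma var_nbhd_mono: "S \<subseteq> S' \<Longrightarrow> var_nbhd E m S \<subseteq> var_nbhd E m S'"
  unfolding var_nbhd_def by auto

lemma large_T_bound:
  fixes R \<alpha> :: real
  assumes alpha: "1 \<le> \<alpha>"
    and mreal: "real m = real n * (1 - R)"
    and edges: "\<forall>i j. E i j \<longrightarrow> i < m \<and> j < n"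
    and L2: "\<forall>S. S \<subseteq> {..<n} \<and> real (card S) \<le> real_of_int \<lceil>real n * (1 - R) / (2 * \<alpha>)\<rceil>
          \<longrightarrow> real (card (var_nbhd E m S)) \<ge> \<alpha> * real (card S)"
    and T: "T \<subseteq> {..<m}" and big: "real (card T) > real m / 2"
  shows "real (card (chk_nbhd E n T)) \<ge> real n - real m + real (card T)"
proof -
  define S where "S = {..<n} - chk_nbhd E n T"
  have Sn: "S \<subseteq> {..<n}" unfolding S_def by auto
  have finT: "finite T" using T finite_subset by blast
  have VS: "var_nbhd E m S \<subseteq> {..<m} - T"
    unfolding var_nbhd_def S_def chk_nbhd_def using edges by auto
  have cardVS: "real (card (var_nbhd E m S)) \<le> real m - real (card T)"
  proof -
    have "card (var_nbhd E m S) \<le> card ({..<m} - T)" by (rule card_mono[OF _ VS]) auto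
    also have "\<dots> = m - card T" using T finT by (simp add: card_Diff_subset)
    finally show ?thesis using card_mono[OF _ T] by (simp add: of_nat_diff)
  qed
  define K where "K = \<lceil>real n * (1 - R) / (2 * \<alpha>)\<rceil>"
  have Kge: "real_of_int K \<ge> real m / (2 * \<alpha>)" unfolding K_def mreal by linarith
  have cardS: "real (card S) \<le> real m - real (card T)"
  proof (cases "real (card S) \<le> real_of_int K")
    case True
    then have "\<alpha> * real (card S) \<le> real (card (var_nbhd E m S))" using L2 Sn unfolding K_def by blast
    then have "\<alpha> * real (card S) \<le> real m - real (card T)" using cardVS by linarith
    moreover have "real (card S) \<le> \<alpha> * real (card S)" using alpha by (simp add: mult_le_cancel_right1)
    ultimately show ?thesis by linarith
  next
    case False
    have "0 \<le> real m / (2 * \<alpha>)" using alpha by simp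
    then have K0a: "K \<ge> 0" using Kge by linarith
    have "K \<le> int (card S)" using False by linarith
    then have K0: "K \<ge> 0" "nat K \<le> card S" using K0a by auto
    obtain S' where S': "S' \<subseteq> S" "card S' = nat K"
      using obtain_subset_with_card_n[OF K0(2)] by blast
    have "\<alpha> * real (card S') \<le> real (card (var_nbhd E m S'))"
    proof -
      have c': "real (card S') = real_of_int K" using S' K0 by simp
      have "S' \<subseteq> {..<n}" using S' Sn by auto
      moreover have "real (card S') \<le> real_of_int \<lceil>real n * (1 - R) / (2 * \<alpha>)\<rceil>"
        using c' unfolding K_def by simp
      ultimately show ?thesis using L2 by blast
    qed
    also have "\<dots> \<le> real (card (var_nbhd E m S))"
      using var_nbhd_mono[OF S'(1)] by (intro of_nat_mono card_mono) (auto simp: var_nbhd_def)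
    finally have "\<alpha> * real_of_int K \<le> real m - real (card T)" using S' K0 cardVS by simp
    moreover have "\<alpha> * real_of_int K \<ge> real m / 2"
    proof -
      have "\<alpha> * real_of_int K \<ge> \<alpha> * (real m / (2 * \<alpha>))" using Kge alpha by (intro mult_left_mono) auto
      also have "\<alpha> * (real m / (2 * \<alpha>)) = real m / 2" using alpha by (simp add: field_simps)
      finally show ?thesis .
    qed
    ultimately show ?thesis using big by linarith
  qed
  have "chk_nbhd E n T \<subseteq> {..<n}" unfolding chk_nbhd_def by auto
  then have "card S = n - card (chk_nbhd E n T)" unfolding S_def
    by (simp add: card_Diff_subset finite_subset)
  moreover have "card (chk_nbhd E n T) \<le> n"
    using card_mono[OF finite_lessThan \<open>chk_nbhd E n T \<subseteq> {..<n}\<close>] by simp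
  ultimately have "card (chk_nbhd E n T) = n - card S" by simp
  moreover have "card S \<le> n" using card_mono[OF finite_lessThan Sn] by simp
  ultimately show ?thesis using cardS by (simp add: of_nat_diff)
qed

lemma sum_pow_card:
  assumes "finite A"
  shows "(\<Sum>T\<in>Pow A. (y::real) ^ card T) = (1 + y) ^ card A"
proof -
  have "(\<Prod>x\<in>A. y + 1) = (\<Sum>X\<in>Pow A. (\<Prod>x\<in>X. y) * (\<Prod>x\<in>A-X. 1))"
    by (rule prod_add[OF assms])
  then show ?thesis by (simp add: add.commute)
qed

lemma sum_pow_card_ne:
  assumes "finite A"
  shows "(\<Sum>T\<in>Pow A - {{}}. (y::real) ^ card T) = (1 + y) ^ card A - 1"
proof -
  have "(\<Sum>T\<in>Pow A. y ^ card T) = y ^ card {} + (\<Sum>T\<in>Pow A - {{}}. y ^ card T)"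
    using assms by (subst sum.remove[of "Pow A" "{}"]) auto
  then show ?thesis using sum_pow_card[OF assms, of y] by simp
qed

lemma exp_minus_one_le:
  assumes "0 \<le> x" "x \<le> 1"
  shows "exp x - 1 \<le> exp 1 * (x::real)"
proof -
  have "1 - x \<le> exp (-x)" using exp_ge_add_one_self[of "-x"] by simp
  then have "exp x * (1 - x) \<le> exp x * exp (-x)" by (intro mult_left_mono) auto
  then have "exp x - 1 \<le> x * exp x" by (simp add: exp_minus field_simps)
  also have "\<dots> \<le> x * exp 1" using assms by (intro mult_left_mono) auto
  finally show ?thesis by (simp add: mult.commute)
qed

lemma term_eq:
  assumes "p > 0" "t \<ge> 1"
  shows "real p ^ (t - 1) / real p ^ k = real p powr (real t - 1 - real k)"
proof -
  have e: "real t - 1 - real k = real (t - 1) - real k" using assms by (simp add: of_nat_diff)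
  have "real p powr (real t - 1 - real k) = real p powr (real (t - 1)) / real p powr real k"
    unfolding e by (rule powr_diff)
  also have "\<dots> = real p ^ (t - 1) / real p ^ k"
    using assms by (simp only: powr_realpow of_nat_0_less_iff)
  finally show ?thesis by simp
qed

lemma n_bound:
  fixes R lam \<alpha> A \<beta> B \<epsilon> \<theta> :: real
  assumes R: "0 < R" "R < 1" and lam: "lam > 0" and alpha: "1 \<le> \<alpha>"
    and beta: "1 / (1 - R) < \<beta>" "\<beta> < B"
    and theta: "0 < \<theta>" and Bl: "lam * (B - 1) \<ge> 1"
    and mreal: "real m = real n * (1 - R)" and edges: "\<forall>i j. E i j \<longrightarrow> i < m \<and> j < n"
    and gd: "good R \<alpha> A \<beta> B \<epsilon> \<theta> E n m" and n1: "n \<ge> 1" and p: "prime p"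
    and pge: "real p \<ge> real n powr lam"
  shows "measure_pmf.prob (pmf_of_set (coeff_space p m n)) {h. rank_mod p m n (lda_matrix E h) \<noteq> m}
    \<le> exp 1 * real n * real n powr (-(lam * B))
       + 2 ^ n * real n powr (-(lam * min ((\<beta> - 1) * \<theta> * (1 - R)) R * real n))"
proof -
  define c where "c = min ((\<beta> - 1) * \<theta> * (1 - R)) R"
  define P where "P = real p"
  have p2: "p \<ge> 2" using p prime_ge_2_nat by blast
  have P1: "P \<ge> 1" and P0: "P > 0" unfolding P_def using p2 by auto
  have p0: "p > 0" using p2 by simp
  have b1: "\<beta> > 1"
  proof -
    have "1 / (1 - R) > 1" using R by (simp add: field_simps)
    then show ?thesis using beta by linarith
  qed
  have B1: "B > 1" using b1 beta by linarith
  have c_le1: "c \<le> (\<beta> - 1) * \<theta> * (1 - R)" and c_le2: "c \<le> R" unfolding c_def by auto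
  have mn: "m \<le> n"
  proof -
    have "real m \<le> real n" using mreal R n1 by (simp add: mult_left_le)
    then show ?thesis by simp
  qed
  have n0: "real n > 0" using n1 by simp
  define y where "y = P powr (-(B - 1))"
  have y0: "y > 0" unfolding y_def using P0 by simp
  obtain L1 L2 R1 R2 where
      R1: "\<forall>T. T \<subseteq> {..<m} \<and> real (card T) \<le> \<theta> * real n * (1 - R)
          \<longrightarrow> real (card (chk_nbhd E n T)) \<ge> B * real (card T)"
    and R2: "\<forall>T. T \<subseteq> {..<m} \<and> real (card T) \<le> real n * (1 - R) / 2
          \<longrightarrow> real (card (chk_nbhd E n T)) \<ge> \<beta> * real (card T)"
    and L2: "\<forall>S. S \<subseteq> {..<n} \<and> real (card S) \<le> real_of_int \<lceil>real n * (1 - R) / (2 * \<alpha>)\<rceil>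
          \<longrightarrow> real (card (var_nbhd E m S)) \<ge> \<alpha> * real (card S)"
    using gd unfolding good_def by blast
  have termb: "real p ^ (card T - 1) / real p ^ card (chk_nbhd E n T)
      \<le> P powr (-1) * y ^ card T + P powr (-(c * real n))"
    if T: "T \<in> Pow {..<m} - {{}}" for T
  proof -
    define t where "t = card T"
    define k where "k = card (chk_nbhd E n T)"
    have Tm: "T \<subseteq> {..<m}" and Tne: "T \<noteq> {}" using T by auto
    have "finite T" using finite_subset[OF Tm] by simp
    then have t1: "t \<ge> 1" unfolding t_def using Tne by (simp add: Suc_le_eq card_gt_0_iff)
    have eq: "real p ^ (t - 1) / real p ^ k = P powr (real t - 1 - real k)"
      unfolding P_def by (rule term_eq[OF p0 t1])
    have nn1: "P powr (-1) * y ^ t \<ge> 0" "P powr (-(c * real n)) \<ge> 0" using P0 y0 by auto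
    have yt: "y ^ t = P powr (-(B - 1) * real t)"
      unfolding y_def using P0 by (simp add: powr_powr[symmetric] powr_realpow)
    show ?thesis
    proof (cases "real t \<le> \<theta> * real n * (1 - R)")
      case True
      then have "real k \<ge> B * real t" using R1 Tm unfolding t_def k_def by blast
      then have "real t - 1 - real k \<le> -1 + (-(B - 1) * real t)" by (simp add: algebra_simps)
      then have "P powr (real t - 1 - real k) \<le> P powr (-1 + (-(B - 1) * real t))"
        using P1 by (rule powr_mono)
      also have "\<dots> = P powr (-1) * y ^ t" unfolding yt by (rule powr_add)
      finally show ?thesis using eq nn1 unfolding t_def k_def by linarith
    next
      case False
      have "real t - 1 - real k \<le> -(c * real n)"
      proof (cases "real t \<le> real n * (1 - R) / 2")
        case True
        then have "real k \<ge> \<beta> * real t" using R2 Tm unfolding t_def k_def by blast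
        then have "real t - 1 - real k \<le> -((\<beta> - 1) * real t)" by (simp add: algebra_simps)
        moreover have "(\<beta> - 1) * real t \<ge> (\<beta> - 1) * (\<theta> * real n * (1 - R))"
          using False b1 by (intro mult_left_mono) auto
        moreover have "c * real n \<le> (\<beta> - 1) * \<theta> * (1 - R) * real n"
          using c_le1 n0 by (intro mult_right_mono) auto
        ultimately show ?thesis by (simp add: algebra_simps)
      next
        case False
        then have big: "real (card T) > real m / 2" using mreal unfolding t_def by simp
        have "real k \<ge> real n - real m + real t"
          using large_T_bound[OF alpha mreal edges L2 Tm big] unfolding k_def t_def .
        then have "real t - 1 - real k \<le> -(R * real n)" using mreal by (simp add: algebra_simps)
        moreover have "c * real n \<le> R * real n" using c_le2 n0 by (intro mult_right_mono) auto
        ultimately show ?thesis by simp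
      qed
      then have "P powr (real t - 1 - real k) \<le> P powr (-(c * real n))" using P1 by (rule powr_mono)
      then show ?thesis using eq nn1 unfolding t_def k_def by linarith
    qed
  qed
  have "measure_pmf.prob (pmf_of_set (coeff_space p m n)) {h. rank_mod p m n (lda_matrix E h) \<noteq> m}
      \<le> (\<Sum>T\<in>Pow {..<m} - {{}}. real p ^ (card T - 1) / real p ^ card (chk_nbhd E n T))"
    by (rule prob_bound[OF p])
  also have "\<dots> \<le> (\<Sum>T\<in>Pow {..<m} - {{}}. P powr (-1) * y ^ card T + P powr (-(c * real n)))"
    by (rule sum_mono) (rule termb)
  also have "\<dots> = P powr (-1) * ((1 + y) ^ m - 1) + real (card (Pow {..<m} - {{}})) * P powr (-(c * real n))"
    by (simp only: sum.distrib sum_distrib_left[symmetric] sum_pow_card_ne[OF finite_lessThan] card_lessThan sum_constant)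
  also have "\<dots> \<le> exp 1 * real n * real n powr (-(lam * B)) + 2 ^ n * real n powr (-(lam * c * real n))"
  proof (rule add_mono)
    have npl: "real n powr lam > 0" using n0 by simp
    have ybound: "y \<le> real n powr (-(lam * (B - 1)))"
    proof -
      have "y \<le> (real n powr lam) powr (-(B - 1))"
        unfolding y_def P_def using B1 npl pge by (intro powr_mono2') auto
      also have "\<dots> = real n powr (-(lam * (B - 1)))" by (simp add: powr_powr algebra_simps)
      finally show ?thesis .
    qed
    have my: "real m * y \<le> 1"
    proof -
      have "real m * y \<le> real n * real n powr (-(lam * (B - 1)))"
        using mn ybound y0 by (intro mult_mono) auto
      also have "\<dots> = real n powr (1 - lam * (B - 1))"
        using n0 by (simp add: powr_diff powr_minus divide_inverse)
      also have "\<dots> \<le> real n powr 0" using Bl n1 by (intro powr_mono) auto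
      finally show ?thesis using n0 by simp
    qed
    have "(1 + y) ^ m \<le> exp y ^ m" using y0 by (intro power_mono) auto
    also have "\<dots> = exp (real m * y)" by (simp add: exp_of_nat_mult)
    finally have "(1 + y) ^ m - 1 \<le> exp 1 * (real m * y)"
      using exp_minus_one_le[of "real m * y"] my y0 by simp
    then have "P powr (-1) * ((1 + y) ^ m - 1) \<le> P powr (-1) * (exp 1 * (real m * y))"
      using P0 by (intro mult_left_mono) auto
    also have "\<dots> = exp 1 * real m * (P powr (-1) * y)" by (simp only: mult_ac)
    also have "P powr (-1) * y = P powr (-B)"
      unfolding y_def powr_add[symmetric] by simp
    finally have "P powr (-1) * ((1 + y) ^ m - 1) \<le> exp 1 * real m * P powr (-B)" .
    also have "exp 1 * real m * P powr (-B) \<le> exp 1 * real n * real n powr (-(lam * B))"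
    proof (rule mult_mono)
      show "exp 1 * real m \<le> exp 1 * real n" using mn by simp
      have "P powr (-B) \<le> (real n powr lam) powr (-B)"
        unfolding P_def using B1 npl pge by (intro powr_mono2') auto
      then show "P powr (-B) \<le> real n powr (-(lam * B))" by (simp add: powr_powr)
    qed auto
    finally show "P powr (-1) * ((1 + y) ^ m - 1) \<le> exp 1 * real n * real n powr (-(lam * B))" .
  next
    have "card (Pow {..<m} - {{}}) \<le> card (Pow {..<m})" by (rule card_mono) auto
    also have "\<dots> = 2 ^ m" by (simp add: card_Pow)
    also have "\<dots> \<le> 2 ^ n" using mn by (simp add: power_increasing)
    finally have "real (card (Pow {..<m} - {{}})) \<le> 2 ^ n" by (metis of_nat_le_iff of_nat_numeral of_nat_power)
    moreover have "P powr (-(c * real n)) \<le> real n powr (-(lam * c * real n))"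
    proof -
      have c0: "c > 0" unfolding c_def using b1 theta R by auto
      have "P powr (-(c * real n)) \<le> (real n powr lam) powr (-(c * real n))"
        unfolding P_def using c0 n0 pge by (intro powr_mono2') auto
      then show ?thesis by (simp add: powr_powr mult.assoc)
    qed
    ultimately show "real (card (Pow {..<m} - {{}})) * P powr (-(c * real n)) \<le> 2 ^ n * real n powr (-(lam * c * real n))"
      by (intro mult_mono) auto
  qed
  finally show ?thesis unfolding c_def .
qed

lemma lda_prime_prop:
  "prime (lda_prime lam n) \<and> real (lda_prime lam n) \<ge> real n powr lam"
proof -
  obtain q :: nat where q: "prime q" "q > nat \<lceil>real n powr lam\<rceil>" using bigger_prime by blast
  have "real q \<ge> real n powr lam"
  proof -
    have "real q \<ge> real (nat \<lceil>real n powr lam\<rceil>)" using q(2) by simp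
    moreover have "real (nat \<lceil>real n powr lam\<rceil>) \<ge> real n powr lam" by linarith
    ultimately show ?thesis by linarith
  qed
  then have "\<exists>p. prime p \<and> real p \<ge> real n powr lam" using q by blast
  then show ?thesis unfolding lda_prime_def by (rule LeastI_ex)
qed

lemma lim1: "s < (0::real) \<Longrightarrow> ((\<lambda>n::nat. real n powr s) \<longlongrightarrow> 0) at_top"
  by real_asymp

lemma lim2: "((\<lambda>n::nat. (1/2)^n * real n powr K) \<longlongrightarrow> 0) at_top"
  by real_asymp

lemma exp_part:
  fixes a :: real
  assumes a: "a > 0"
  shows "\<forall>\<^sub>F n in sequentially. 2 ^ n * real n powr (-(a * real n)) \<le> (1/2) ^ n"
proof -
  have "\<forall>\<^sub>F n in sequentially. real n powr (-a) < 1/4"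
  proof -
    have "((\<lambda>n::nat. real n powr (-a)) \<longlongrightarrow> 0) at_top" using lim1[of "-a"] a by simp
    then show ?thesis unfolding order_tendsto_iff by (metis divide_pos_pos zero_less_numeral zero_less_one)
  qed
  moreover have "\<forall>\<^sub>F n in sequentially. n \<ge> 1" by (rule eventually_ge_at_top)
  ultimately show ?thesis
  proof eventually_elim
    case (elim n)
    have n0: "real n > 0" using elim by simp
    have "real n powr (-(a * real n)) = (real n powr (-a)) ^ n"
    proof -
      have "(real n powr (-a)) ^ n = (real n powr (-a)) powr (real n)"
        using n0 by (simp add: powr_realpow)
      also have "\<dots> = real n powr (-(a * real n))" by (simp add: powr_powr)
      finally show ?thesis by simp
    qed
    then have "2 ^ n * real n powr (-(a * real n)) = (2 * real n powr (-a)) ^ n"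
      by (simp add: power_mult_distrib)
    also have "\<dots> \<le> (1/2) ^ n" using elim by (intro power_mono) auto
    finally show ?case .
  qed
qed

theorem lemma4:
  fixes R lam \<alpha> A \<beta> B \<epsilon> \<theta> \<delta> :: real
    and dV dC :: nat
    and N :: "nat set"
    and m :: "nat \<Rightarrow> nat"
    and G :: "nat \<Rightarrow> nat \<Rightarrow> nat \<Rightarrow> bool"
  assumes R: "0 < R" "R < 1"
    and lam_pos: "lam > 0"
    and deg: "dC > 0" "real dV / real dC = 1 - R"
    and alpha: "1 \<le> \<alpha>" "\<alpha> < A"
    and beta: "1 / (1 - R) < \<beta>" "\<beta> < min (2 / (1 - R)) B"
    and eps: "0 < \<epsilon>" "\<epsilon> < (1 - R) / A"
    and theta: "0 < \<theta>" "\<theta> < 1 / (B * (1 - R))"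
    and m_def: "\<forall>n\<in>N. real (m n) = real n * (1 - R)"
    and reg: "\<forall>n\<in>N. biregular (G n) n (m n) dV dC"
    and gd: "\<forall>n\<in>N. good R \<alpha> A \<beta> B \<epsilon> \<theta> (G n) n (m n)"
    and delta: "\<delta> > 0"
    and B_bound: "B > 2 + (1 + \<delta>) / lam"
  shows "\<exists>g :: nat \<Rightarrow> real. g \<longlonglongrightarrow> 0 \<and>
           (\<forall>n\<in>N. prob_not_full_rank lam (G n) n (m n)
                    \<le> real n powr (-(2 * lam + \<delta>)) * (1 + g n))"
proof -
  define K where "K = 2 * lam + \<delta>"
  define c where "c = min ((\<beta> - 1) * \<theta> * (1 - R)) R"
  define pr where "pr n = prob_not_full_rank lam (G n) n (m n)" for n
  define g where "g n = (if n \<in> N \<and> n \<ge> 1 then pr n * real n powr K else 0)" for n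
  define h where "h n = exp 1 * real n powr (1 - lam * B + K) + (1/2) ^ n * real n powr K" for n
  have lB: "lam * B > 2 * lam + 1 + \<delta>"
  proof -
    have "(1 + \<delta>) / lam < B - 2" using B_bound by linarith
    then have "1 + \<delta> < (B - 2) * lam" using lam_pos by (simp add: divide_less_eq)
    then show ?thesis by (simp add: algebra_simps)
  qed
  have Bl: "lam * (B - 1) \<ge> 1" using lB lam_pos delta by (simp add: algebra_simps)
  have b1: "\<beta> > 1"
  proof -
    have "1 / (1 - R) > 1" using R by (simp add: field_simps)
    then show ?thesis using beta by linarith
  qed
  have c0: "c > 0" unfolding c_def using b1 theta R by auto
  have betaB: "\<beta> < B" using beta by simp
  have pr_ge0: "pr n \<ge> 0" for n unfolding pr_def prob_not_full_rank_def Let_def by simp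
  have bound: "pr n \<le> exp 1 * real n * real n powr (-(lam * B)) + 2 ^ n * real n powr (-(lam * c * real n))"
    if n: "n \<in> N" "n \<ge> 1" for n
  proof -
    have edges: "\<forall>i j. G n i j \<longrightarrow> i < m n \<and> j < n" using reg n unfolding biregular_def by blast
    show ?thesis
      using n_bound[OF R lam_pos alpha(1) beta(1) betaB theta(1) Bl m_def[rule_format, OF n(1)] edges
          gd[rule_format, OF n(1)] n(2) conjunct1[OF lda_prime_prop] conjunct2[OF lda_prime_prop]]
      unfolding pr_def prob_not_full_rank_def Let_def c_def by simp
  qed
  have main: "pr n \<le> real n powr (-K) * (1 + g n)" if n: "n \<in> N" for n
  proof (cases "n \<ge> 1")
    case False
    then have n0: "n = 0" by simp
    then have "real (m n) = 0" using m_def n by simp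
    then have "m n = 0" by simp
    then have "{h. rank_mod (lda_prime lam n) (m n) n (lda_matrix (G n) h) \<noteq> m n} = {}"
      using rank_eq_if_indep[of "lda_prime lam n" n _ 0] by (auto simp: rows_indep_mod_def)
    then have "pr n = 0" unfolding pr_def prob_not_full_rank_def Let_def by simp
    then show ?thesis using n0 by simp
  next
    case True
    then have n0: "real n > 0" by simp
    have "real n powr (-K) * (1 + g n) = real n powr (-K) + pr n * (real n powr (-K) * real n powr K)"
      unfolding g_def using n True by (simp add: algebra_simps)
    also have "real n powr (-K) * real n powr K = 1" using n0 by (simp add: powr_add[symmetric])
    finally show ?thesis by simp
  qed
  have gh: "\<forall>\<^sub>F n in sequentially. g n \<le> h n"
    using exp_part[of "lam * c"] lam_pos c0 eventually_ge_at_top[of 1]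
  proof -
    have a0: "lam * c > 0" using lam_pos c0 by simp
    show ?thesis using exp_part[OF a0] eventually_ge_at_top[of "1::nat"]
    proof eventually_elim
      case (elim n)
      show ?case
      proof (cases "n \<in> N")
        case False
        then have "g n = 0" unfolding g_def by simp
        moreover have "h n \<ge> 0" unfolding h_def by simp
        ultimately show ?thesis by simp
      next
        case True
        have n0: "real n > 0" using elim by simp
        have "g n = pr n * real n powr K" unfolding g_def using True elim by simp
        also have "\<dots> \<le> (exp 1 * real n * real n powr (-(lam * B)) + 2 ^ n * real n powr (-(lam * c * real n))) * real n powr K"
          using bound[OF True elim(2)] by (intro mult_right_mono) auto
        also have "\<dots> = exp 1 * (real n * real n powr (-(lam * B)) * real n powr K) + (2 ^ n * real n powr (-(lam * c * real n))) * real n powr K"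
          by (simp add: algebra_simps)
        also have "real n * real n powr (-(lam * B)) * real n powr K = real n powr (1 - lam * B + K)"
        proof -
          have "real n powr (1 - lam * B + K) = real n powr (1 + (-(lam * B)) + K)" by simp
          also have "\<dots> = real n powr 1 * real n powr (-(lam * B)) * real n powr K"
            by (simp only: powr_add)
          finally show ?thesis using n0 by simp
        qed
        also have "(2 ^ n * real n powr (-(lam * c * real n))) * real n powr K \<le> (1/2) ^ n * real n powr K"
          using elim(1) by (intro mult_right_mono) (auto simp: mult.assoc)
        finally show ?thesis unfolding h_def by simp
      qed
    qed
  qed
  have h0: "h \<longlonglongrightarrow> 0"
  proof -
    have e: "1 - lam * B + K < 0" unfolding K_def using lB by simp
    have "(\<lambda>n. exp 1 * real n powr (1 - lam * B + K)) \<longlonglongrightarrow> exp 1 * 0"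
      by (intro tendsto_mult tendsto_const lim1 e)
    moreover have "(\<lambda>n. (1/2) ^ n * real n powr K) \<longlonglongrightarrow> 0" by (rule lim2)
    ultimately show ?thesis unfolding h_def using tendsto_add by fastforce
  qed
  have g0: "g \<longlonglongrightarrow> 0"
  proof (rule tendsto_sandwich[OF _ gh tendsto_const h0])
    show "\<forall>\<^sub>F n in sequentially. 0 \<le> g n" unfolding g_def using pr_ge0 by (auto intro!: always_eventually)
  qed
  show ?thesis
    using g0 main unfolding pr_def K_def by blast
qed

end
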